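(* Let $q\ge 3$ be a prime power and $1\le d\le e$. For all $0\le i\le d-1$ and $1\le j\le d$, $$|B_j(i)|>|B_j(i+1)|.$$
   Context: For integers $m\ge 0$ and $l$, ${m\brack l}=\prod_{t=1}^{l}\frac{q^{m-t+1}-1}{q^t-1}$ for $l\ge0$ and $0$ for $l<0$. For $0\le i,j\le d$, $$B_j(i)=\sum_{h=0}^{\min\{j,d-i\}}(-1)^{j-h}q^{eh+\binom{j-h}{2}}{d-h\brack d-j}{d-i\brack h};$$ these are the eigenvalues of the bilinear forms graph $H_q(d,e,j)$ (vertices: $d\times e$ matrices over $\mathbb F_q$, adjacent iff their difference has rank $j$). *)

theory Defs
  imports Complex_Main "HOL-Computational_Algebra.Primes"
begin

text \<open>Gaussian binomial coefficient [m, l]_q for natural m, l (the case l < 0,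
  where it is 0, never arises in the formula for B below).\<close>
definition gauss_binom :: "nat \<Rightarrow> nat \<Rightarrow> nat \<Rightarrow> real" where
  "gauss_binom q m l = (\<Prod>t = 1..l. (real q ^ (m - t + 1) - 1) / (real q ^ t - 1))"

text \<open>Eigenvalue B_j(i) of the bilinear forms graph H_q(d,e,j).\<close>
definition bil_eig :: "nat \<Rightarrow> nat \<Rightarrow> nat \<Rightarrow> nat \<Rightarrow> nat \<Rightarrow> real" where
  "bil_eig q d e j i =
     (\<Sum>h = 0..min j (d - i).
        (-1) ^ (j - h) * real q ^ (e * h + ((j - h) choose 2))
        * gauss_binom q (d - h) (d - j) * gauss_binom q (d - i) h)"

definition prime_power :: "nat \<Rightarrow> bool" where
  "prime_power q \<longleftrightarrow> (\<exists>p k. prime p \<and> k \<ge> 1 \<and> q = p ^ k)"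

end

theory Submission imports Defs begin


lemma gb_Suc: "gauss_binom q m (Suc l) = gauss_binom q m l * ((real q ^ (m - Suc l + 1) - 1) / (real q ^ Suc l - 1))"
  unfolding gauss_binom_def by simp

lemma pw_gt1: "q \<ge> 2 \<Longrightarrow> k \<ge> 1 \<Longrightarrow> real q ^ k - 1 > 0"
proof -
  assume q: "q \<ge> 2" and k: "k \<ge> 1"
  have "1 < real q ^ k" using q k by (intro one_less_power) auto
  then show ?thesis by simp
qed

lemma gb_pos: "q \<ge> 2 \<Longrightarrow> gauss_binom q m l > 0"
  unfolding gauss_binom_def
proof (rule prod_pos, rule divide_pos_pos)
  fix t assume "q \<ge> 2" "t \<in> {1..l}"
  then show "0 < real q ^ (m - t + 1) - 1" "0 < real q ^ t - 1"
    using pw_gt1[of q "m - t + 1"] pw_gt1[of q t] by auto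
qed

lemma L1: assumes "h < m" "q \<ge> 2"
  shows "gauss_binom q m (Suc h) * (real q ^ Suc h - 1) = gauss_binom q m h * (real q ^ (m - h) - 1)"
proof -
  have "m - Suc h + 1 = m - h" using assms by simp
  moreover have "real q ^ Suc h - 1 > 0" using pw_gt1[OF assms(2), of "Suc h"] by simp
  ultimately show ?thesis by (simp add: gb_Suc)
qed

lemma L2: assumes "k < n" "q \<ge> 2"
  shows "gauss_binom q n k * (real q ^ (n - k) - 1) = gauss_binom q (n - 1) k * (real q ^ n - 1)"
  using assms(1)
proof (induction k)
  case 0 then show ?case by (simp add: gauss_binom_def)
next
  case (Suc k)
  let ?x = "real q"
  have IH: "gauss_binom q n k * (?x ^ (n - k) - 1) = gauss_binom q (n - 1) k * (?x ^ n - 1)"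
    using Suc by simp
  have D: "?x ^ Suc k - 1 > 0" using pw_gt1[OF assms(2), of "Suc k"] by simp
  have e1: "n - Suc k + 1 = n - k" "n - 1 - Suc k + 1 = n - Suc k" using Suc.prems by auto
  have "gauss_binom q n (Suc k) * (?x ^ (n - Suc k) - 1)
      = gauss_binom q n k * (?x ^ (n - k) - 1) * (?x ^ (n - Suc k) - 1) / (?x ^ Suc k - 1)"
    by (subst gb_Suc, subst e1(1)) simp
  also have "\<dots> = gauss_binom q (n - 1) k * (?x ^ n - 1) * (?x ^ (n - Suc k) - 1) / (?x ^ Suc k - 1)"
    by (simp add: IH)
  also have "\<dots> = gauss_binom q (n - 1) (Suc k) * (?x ^ n - 1)"
    by (subst gb_Suc, subst e1(2)) simp
  finally show ?case .
qed

lemma gb_nn: assumes "q \<ge> 2" shows "gauss_binom q m m = 1"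
proof (induction m)
  case 0 then show ?case by (simp add: gauss_binom_def)
next
  case (Suc m)
  have a: "gauss_binom q (Suc m) (Suc m) * (real q ^ Suc m - 1) = gauss_binom q (Suc m) m * (real q ^ 1 - 1)"
    using L1[of m "Suc m" q] assms by simp
  have b: "gauss_binom q (Suc m) m * (real q ^ 1 - 1) = gauss_binom q m m * (real q ^ Suc m - 1)"
    using L2[of m "Suc m" q] assms by simp
  have D: "real q ^ Suc m - 1 > 0" using pw_gt1[OF assms, of "Suc m"] by simp
  show ?case using a b Suc.IH D by simp
qed

definition T :: "nat \<Rightarrow> nat \<Rightarrow> nat \<Rightarrow> nat \<Rightarrow> nat \<Rightarrow> nat \<Rightarrow> real" where
  "T q d e j n h = real q ^ (e * h + ((j - h) choose 2)) * gauss_binom q (d - h) (d - j) * gauss_binom q n h"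

lemma T_pos: "q \<ge> 2 \<Longrightarrow> T q d e j n h > 0"
  unfolding T_def using gb_pos by simp

lemma choose2_Suc: "Suc a choose 2 = a + (a choose 2)"
  by (simp add: numeral_2_eq_2)

lemma pm1_ge: fixes x :: real assumes "x \<ge> 1" "k \<ge> 1" shows "x ^ k - 1 \<ge> x ^ (k - 1) * (x - 1)"
proof -
  have "x ^ k = x ^ (k - 1) * x" using assms(2) by (metis One_nat_def Suc_diff_le diff_Suc_1 power_Suc2)
  moreover have "x ^ (k - 1) \<ge> 1" using assms(1) by simp
  ultimately show ?thesis by (simp add: algebra_simps)
qed

lemma pm1_ge1: fixes x :: real assumes "x \<ge> 1" "k \<ge> 1" shows "x ^ k - 1 \<ge> x - 1"
proof -
  have "x ^ k \<ge> x ^ 1" using assms by (intro power_increasing) auto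
  then show ?thesis by simp
qed

lemma mono_T: assumes q3: "q \<ge> 3" and gj: "g < j" and gn: "g < n" and jd: "j \<le> d" and nd: "n \<le> d" and de: "d \<le> e"
  shows "T q d e j n g \<le> T q d e j n (Suc g)"
proof -
  define x where "x = real q"
  have x3: "x \<ge> 3" using q3 unfolding x_def by simp
  have q2: "q \<ge> 2" using q3 by simp
  define a where "a = j - Suc g"
  have ja: "j - g = Suc a" using gj unfolding a_def by simp
  define G0 where "G0 = gauss_binom q (d - g) (d - j)"
  define G1 where "G1 = gauss_binom q (d - Suc g) (d - j)"
  define N0 where "N0 = gauss_binom q n g"
  define N1 where "N1 = gauss_binom q n (Suc g)"
  have pos: "G1 > 0" "N0 > 0" using gb_pos q2 unfolding G1_def N0_def by auto
  have rG: "G0 * (x ^ Suc a - 1) = G1 * (x ^ (d - g) - 1)"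
  proof -
    have "d - j < d - g" using gj jd by simp
    from L2[OF this q2] have "G0 * (x ^ (d - g - (d - j)) - 1) = G1 * (x ^ (d - g) - 1)"
      unfolding G0_def G1_def x_def by (simp add: diff_diff_add)
    moreover have "d - g - (d - j) = Suc a" using ja jd gj by simp
    ultimately show ?thesis by simp
  qed
  have rN: "N1 * (x ^ Suc g - 1) = N0 * (x ^ (n - g) - 1)"
    using L1[OF gn q2] unfolding N0_def N1_def x_def by simp
  have poly: "x ^ a * ((x ^ (d - g) - 1) * (x ^ Suc g - 1)) \<le> x ^ e * ((x ^ (n - g) - 1) * (x ^ Suc a - 1))"
  proof -
    have xk: "x ^ k \<ge> 1" for k using x3 by simp
    have "(x ^ (d - g) - 1) * (x ^ Suc g - 1) \<le> x ^ (d - g) * x ^ Suc g"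
      using xk[of "Suc g"] xk[of "d - g"] by (intro mult_mono) auto
    also have "\<dots> = x ^ (d + 1)" using gj jd by (simp flip: power_add)
    finally have l: "x ^ a * ((x ^ (d - g) - 1) * (x ^ Suc g - 1)) \<le> x ^ a * x ^ (d + 1)"
      using x3 by (intro mult_left_mono) auto
    have a1: "x ^ (n - g) - 1 \<ge> x - 1" using pm1_ge1[of x "n - g"] x3 gn by simp
    have a2: "x ^ Suc a - 1 \<ge> x ^ a * (x - 1)" using pm1_ge[of x "Suc a"] x3 by simp
    have nn1: "0 \<le> x ^ a * (x - 1)" using x3 by simp
    have pp: "(x - 1) * (x ^ a * (x - 1)) \<le> (x ^ (n - g) - 1) * (x ^ Suc a - 1)"
      using a1 a2 x3 by (intro mult_mono[OF a1 a2 _ nn1]) auto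
    have nn: "0 \<le> (x - 1) * (x ^ a * (x - 1))" using x3 by simp
    have xd: "x ^ d \<le> x ^ e" using de x3 by (intro power_increasing) auto
    have "x ^ d * ((x - 1) * (x ^ a * (x - 1))) \<le> x ^ e * ((x ^ (n - g) - 1) * (x ^ Suc a - 1))"
      by (rule mult_mono[OF xd pp _ nn]) (use x3 in simp)
    moreover have "x ^ a * x ^ (d + 1) \<le> x ^ d * ((x - 1) * (x ^ a * (x - 1)))"
    proof -
      have "3 * x \<le> x * x" using x3 by (intro mult_right_mono) auto
      then have "x \<le> (x - 1) * (x - 1)" by (simp add: algebra_simps)
      then have "x ^ a * x ^ d * x \<le> x ^ a * x ^ d * ((x - 1) * (x - 1))"
        using x3 by (intro mult_left_mono) auto
      then show ?thesis by (simp add: algebra_simps)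
    qed
    ultimately show ?thesis using l by linarith
  qed
  have P: "(x ^ Suc a - 1) * (x ^ Suc g - 1) > 0"
    using pw_gt1[OF q2, of "Suc a"] pw_gt1[OF q2, of "Suc g"] unfolding x_def by simp
  have "x ^ a * G0 * N0 * ((x ^ Suc a - 1) * (x ^ Suc g - 1)) = (x ^ a * N0 * (x ^ Suc g - 1)) * (G0 * (x ^ Suc a - 1))"
    by (simp only: mult_ac)
  also have "\<dots> = (x ^ a * N0 * (x ^ Suc g - 1)) * (G1 * (x ^ (d - g) - 1))" by (simp only: rG)
  also have "\<dots> = (G1 * N0) * (x ^ a * ((x ^ (d - g) - 1) * (x ^ Suc g - 1)))"
    by (simp only: mult_ac)
  also have "\<dots> \<le> (G1 * N0) * (x ^ e * ((x ^ (n - g) - 1) * (x ^ Suc a - 1)))"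
    using poly pos by (intro mult_left_mono) auto
  also have "\<dots> = (x ^ e * G1 * (x ^ Suc a - 1)) * (N0 * (x ^ (n - g) - 1))"
    by (simp only: mult_ac)
  also have "\<dots> = (x ^ e * G1 * (x ^ Suc a - 1)) * (N1 * (x ^ Suc g - 1))" by (simp only: rN)
  also have "\<dots> = x ^ e * G1 * N1 * ((x ^ Suc a - 1) * (x ^ Suc g - 1))"
    by (simp only: mult_ac)
  finally have k: "x ^ a * G0 * N0 \<le> x ^ e * G1 * N1" using P by (simp add: mult_le_cancel_right_pos)
  have "T q d e j n g = x ^ (e * g + (a choose 2)) * (x ^ a * G0 * N0)"
    unfolding T_def x_def G0_def N0_def using ja by (simp add: choose2_Suc power_add algebra_simps)
  also have "\<dots> \<le> x ^ (e * g + (a choose 2)) * (x ^ e * G1 * N1)"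
    using k x3 by (intro mult_left_mono) auto
  also have "\<dots> = T q d e j n (Suc g)"
    unfolding T_def x_def G1_def N1_def a_def by (simp add: power_add algebra_simps)
  finally show ?thesis .
qed

lemma alt:
  fixes t :: "nat \<Rightarrow> real"
  assumes t0: "t 0 \<ge> 0" and mono: "\<And>h. h < m \<Longrightarrow> t h \<le> t (Suc h)"
  shows "0 \<le> (\<Sum>h=0..m. (-1) ^ (m - h) * t h) \<and> (\<Sum>h=0..m. (-1) ^ (m - h) * t h) \<le> t m
     \<and> (m \<ge> 1 \<longrightarrow> (\<Sum>h=0..m. (-1) ^ (m - h) * t h) \<ge> t m - t (m - 1))"
  using mono
proof (induction m)
  case 0 then show ?case using t0 by simp
next
  case (Suc m)
  define S where "S = (\<Sum>h=0..m. (-1) ^ (m - h) * t h)"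
  have IH: "0 \<le> S \<and> S \<le> t m" using Suc unfolding S_def by simp
  have "(\<Sum>h=0..m. (-1) ^ (Suc m - h) * t h) = (\<Sum>h=0..m. - ((-1) ^ (m - h) * t h))"
    by (rule sum.cong) (auto simp: Suc_diff_le)
  also have "\<dots> = - S" unfolding S_def by (simp add: sum_negf)
  finally have e: "(\<Sum>h=0..Suc m. (-1) ^ (Suc m - h) * t h) = t (Suc m) - S" by simp
  have "t m \<le> t (Suc m)" using Suc.prems by simp
  then show ?case unfolding e using IH by simp
qed

lemma bil_eig_T: "bil_eig q d e j i = (\<Sum>h = 0..min j (d - i). (-1) ^ (j - h) * T q d e j (d - i) h)"
  unfolding bil_eig_def T_def by (simp add: mult.assoc)

lemma abs_bil:
  fixes i :: nat
  assumes q2: "q \<ge> 2" and jd: "j \<le> d" and de: "d \<le> e" and q3: "q \<ge> 3"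
  defines "m \<equiv> min j (d - i)"
  shows "\<bar>bil_eig q d e j i\<bar> = (\<Sum>h=0..m. (-1) ^ (m - h) * T q d e j (d - i) h)
     \<and> \<bar>bil_eig q d e j i\<bar> \<le> T q d e j (d - i) m
     \<and> (m \<ge> 1 \<longrightarrow> \<bar>bil_eig q d e j i\<bar> \<ge> T q d e j (d - i) m - T q d e j (d - i) (m - 1))"
proof -
  define S where "S = (\<Sum>h=0..m. (-1) ^ (m - h) * T q d e j (d - i) h)"
  have A: "0 \<le> S \<and> S \<le> T q d e j (d - i) m \<and> (m \<ge> 1 \<longrightarrow> S \<ge> T q d e j (d - i) m - T q d e j (d - i) (m - 1))"
    unfolding S_def
  proof (rule alt)
    show "0 \<le> T q d e j (d - i) 0" using T_pos[OF q2] less_imp_le by blast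
    fix h assume "h < m"
    then show "T q d e j (d - i) h \<le> T q d e j (d - i) (Suc h)"
      using q3 jd de unfolding m_def by (intro mono_T) auto
  qed
  have "bil_eig q d e j i = (\<Sum>h=0..m. (-1) ^ (j - m) * ((-1) ^ (m - h) * T q d e j (d - i) h))"
    unfolding bil_eig_T m_def[symmetric]
  proof (rule sum.cong)
    fix h assume "h \<in> {0..m}"
    then have "j - h = (j - m) + (m - h)" unfolding m_def by auto
    then show "(-1) ^ (j - h) * T q d e j (d - i) h = (-1) ^ (j - m) * ((-1) ^ (m - h) * T q d e j (d - i) h)"
      by (simp add: power_add)
  qed simp
  also have "\<dots> = (-1) ^ (j - m) * S" unfolding S_def by (simp add: sum_distrib_left)
  finally have "\<bar>bil_eig q d e j i\<bar> = S" using A by (simp add: abs_mult power_abs)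
  then show ?thesis using A unfolding S_def by simp
qed

lemma sq_ge: fixes x :: real assumes "x \<ge> 3" shows "x \<le> (x - 1) * (x - 1)"
proof -
  have "3 * x \<le> x * x" using assms by (intro mult_right_mono) auto
  then show ?thesis by (simp add: algebra_simps)
qed

lemma caseA: assumes q3: "q \<ge> 3" and n1: "1 \<le> n" and nj: "n \<le> j" and jd: "j \<le> d" and de: "d \<le> e"
  shows "T q d e j (n - 1) (n - 1) < T q d e j n n - T q d e j n (n - 1)"
proof -
  define x where "x = real q"
  have x3: "x \<ge> 3" using q3 unfolding x_def by simp
  have q2: "q \<ge> 2" using q3 by simp
  have xk: "x ^ k \<ge> 1" for k using x3 by simp
  obtain g where ng: "n = Suc g" using n1 by (cases n) auto
  define a where "a = j - n"
  have ja: "j - g = Suc a" using nj ng unfolding a_def by simp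
  define Gd where "Gd = gauss_binom q (d - g) (d - j)"
  define Gn where "Gn = gauss_binom q (d - n) (d - j)"
  define N where "N = gauss_binom q n g"
  define W where "W = x ^ (e * g + (a choose 2))"
  define A where "A = x ^ Suc a - 1"
  define Dg where "Dg = x ^ (d - g) - 1"
  have Gnpos: "Gn > 0" "W > 0" using gb_pos q2 x3 unfolding Gn_def W_def by auto
  have rG: "Gd * A = Gn * Dg"
  proof -
    have "d - j < d - g" using nj ng jd by simp
    from L2[OF this q2] have "Gd * (x ^ (d - g - (d - j)) - 1) = Gn * Dg"
      unfolding Gd_def Gn_def x_def Dg_def ng by (simp add: diff_diff_add)
    moreover have "d - g - (d - j) = Suc a" using ja jd nj ng by simp
    ultimately show ?thesis unfolding A_def by simp
  qed
  have rN: "N * (x - 1) = x ^ n - 1"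
    using L2[of g n q] q2 gb_nn[OF q2, of g] unfolding N_def x_def ng by simp
  have Tnn: "T q d e j n n = W * x ^ e * Gn"
    unfolding T_def W_def Gn_def x_def a_def using gb_nn[OF q2, of n] ng by (simp add: power_add algebra_simps)
  have Tng: "T q d e j n (n - 1) = W * x ^ a * Gd * N"
    unfolding T_def W_def Gd_def N_def x_def using ja ng by (simp add: choose2_Suc power_add algebra_simps)
  have Tgg: "T q d e j (n - 1) (n - 1) = W * x ^ a * Gd"
    unfolding T_def W_def Gd_def x_def using ja ng gb_nn[OF q2, of g] by (simp add: choose2_Suc power_add algebra_simps)
  have poly: "x ^ a * Dg * (x ^ n + x - 2) < x ^ e * (x - 1) * A"
  proof -
    define y where "y = x ^ g"
    have y1: "y \<ge> 1" unfolding y_def by (rule xk)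
    have xn: "x ^ n = y * x" unfolding y_def ng by simp
    have c1: "x * x - 3 * x + 1 \<ge> 1" using x3 sq_ge[OF x3] by (simp add: algebra_simps)
    have h1: "y * (x * x - 3 * x + 1) \<ge> x * x - 3 * x + 1"
      using mult_right_mono[OF y1, of "x * x - 3 * x + 1"] c1 by simp
    have h2: "(x - 1) * (x - 3) \<ge> 0" using x3 by simp
    have key: "y * x + x - 2 \<le> y * ((x - 1) * (x - 1))"
      using h1 h2 by (simp add: algebra_simps)
    have pos: "x ^ n + x - 2 > 0" using xk[of n] x3 by linarith
    have pp: "0 < x ^ a * (x ^ n + x - 2)" using pos x3 by (intro mult_pos_pos) auto
    have "Dg < x ^ (d - g)" unfolding Dg_def by simp
    then have "(x ^ a * (x ^ n + x - 2)) * Dg < (x ^ a * (x ^ n + x - 2)) * x ^ (d - g)"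
      by (intro mult_strict_left_mono pp)
    then have "x ^ a * Dg * (x ^ n + x - 2) < x ^ a * x ^ (d - g) * (x ^ n + x - 2)"
      by (simp only: mult_ac)
    also have "\<dots> \<le> x ^ a * x ^ (d - g) * (y * ((x - 1) * (x - 1)))"
      unfolding xn using key x3 by (intro mult_left_mono) auto
    also have "\<dots> = (x ^ (d - g) * y * (x - 1)) * (x ^ a * (x - 1))" by (simp only: mult_ac)
    also have "\<dots> \<le> (x ^ (d - g) * y * (x - 1)) * A"
      unfolding A_def using pm1_ge[of x "Suc a"] x3 y1 by (intro mult_left_mono) auto
    also have "x ^ (d - g) * y = x ^ d" unfolding y_def using nj ng jd by (simp flip: power_add)
    also have "x ^ d * (x - 1) * A \<le> x ^ e * (x - 1) * A"
      using x3 pw_gt1[OF q2, of "Suc a"] power_increasing[OF de, of x] unfolding A_def x_def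
      by (intro mult_right_mono) auto
    finally show ?thesis .
  qed
  have P: "(x - 1) * A > 0" unfolding A_def using x3 pw_gt1[OF q2, of "Suc a"] unfolding x_def by simp
  have "(T q d e j n (n - 1) + T q d e j (n - 1) (n - 1)) * ((x - 1) * A) = W * x ^ a * (N * (x - 1) + (x - 1)) * (Gd * A)"
    unfolding Tng Tgg by (simp add: algebra_simps)
  also have "\<dots> = W * x ^ a * (x ^ n - 1 + (x - 1)) * (Gn * Dg)" by (simp only: rN rG)
  also have "\<dots> = (W * Gn) * (x ^ a * Dg * (x ^ n + x - 2))" by (simp add: algebra_simps)
  also have "\<dots> < (W * Gn) * (x ^ e * (x - 1) * A)" using poly Gnpos by simp
  also have "\<dots> = T q d e j n n * ((x - 1) * A)" unfolding Tnn by (simp add: algebra_simps)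
  finally have "T q d e j n (n - 1) + T q d e j (n - 1) (n - 1) < T q d e j n n"
    using P by (simp add: mult_less_cancel_right_pos)
  then show ?thesis by simp
qed

lemma caseB: assumes q3: "q \<ge> 3" and j1: "1 \<le> j" and jn: "j < n" and nd: "n \<le> d" and de: "d \<le> e"
  shows "T q d e j (n - 1) j < T q d e j n j - T q d e j n (j - 1)"
proof -
  define x where "x = real q"
  have x3: "x \<ge> 3" using q3 unfolding x_def by simp
  have q2: "q \<ge> 2" using q3 by simp
  have xk: "x ^ k \<ge> 1" for k using x3 by simp
  obtain g where jg: "j = Suc g" using j1 by (cases j) auto
  define r where "r = n - j"
  have r1: "r \<ge> 1" and ngr: "n - g = Suc r" and njr: "n = j + r" using jn jg unfolding r_def by auto
  define Gj where "Gj = gauss_binom q (d - j) (d - j)"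
  define Gg where "Gg = gauss_binom q (d - g) (d - j)"
  define Nj where "Nj = gauss_binom q n j"
  define Ng where "Ng = gauss_binom q n g"
  define M where "M = gauss_binom q (n - 1) j"
  define W where "W = x ^ (e * g)"
  define Dg where "Dg = x ^ (d - g) - 1"
  define R where "R = x ^ Suc r - 1"
  define Xn where "Xn = x ^ n - 1"
  have pos: "Gj > 0" "Nj > 0" "W > 0" using gb_pos q2 x3 unfolding Gj_def Nj_def W_def by auto
  have rNM: "Nj * (x ^ r - 1) = M * Xn"
    using L2[OF jn q2] unfolding Nj_def M_def Xn_def x_def r_def by simp
  have rNN: "Nj * (x ^ j - 1) = Ng * R"
    using L1[of g n q] jn jg q2 ngr unfolding Nj_def Ng_def R_def x_def by simp
  have rG: "Gg * (x - 1) = Gj * Dg"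
  proof -
    have "d - j < d - g" using jn jg nd by simp
    from L2[OF this q2] have "Gg * (x ^ (d - g - (d - j)) - 1) = Gj * Dg"
      unfolding Gg_def Gj_def x_def Dg_def jg by (simp add: diff_diff_add)
    moreover have "d - g - (d - j) = 1" using jn jg nd by simp
    ultimately show ?thesis by simp
  qed
  have Tnj: "T q d e j n j = W * x ^ e * Gj * Nj"
    unfolding T_def W_def Gj_def Nj_def x_def jg by (simp add: power_add algebra_simps numeral_2_eq_2)
  have Tng: "T q d e j n (j - 1) = W * Gg * Ng"
    unfolding T_def W_def Gg_def Ng_def x_def jg by (simp add: numeral_2_eq_2)
  have Tmj: "T q d e j (n - 1) j = W * x ^ e * Gj * M"
    unfolding T_def W_def Gj_def M_def x_def jg by (simp add: power_add algebra_simps numeral_2_eq_2)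
  have poly: "Dg * (x ^ j - 1) * Xn + x ^ e * (x - 1) * R * (x ^ r - 1) < x ^ e * (x - 1) * R * Xn"
  proof -
    have xj: "x ^ j - 1 > 0" using pw_gt1[OF q2, of j] j1 unfolding x_def by simp
    have e1: "Xn - (x ^ r - 1) = x ^ r * (x ^ j - 1)" unfolding Xn_def njr by (simp add: power_add algebra_simps)
    have "Dg * Xn < x ^ (d - g) * x ^ n"
      unfolding Dg_def Xn_def using xk[of "d - g"] xk[of n]
      by (intro mult_strict_mono) auto
    also have "\<dots> = x ^ d * x * x ^ r" using jn jg nd njr by (simp flip: power_add add: power_Suc2)
    also have "\<dots> \<le> x ^ d * ((x - 1) * (x - 1)) * x ^ r"
      using sq_ge[OF x3] x3 by (intro mult_right_mono mult_left_mono) auto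
    also have "\<dots> = x ^ d * (x - 1) * ((x - 1) * 1) * x ^ r" by (simp add: algebra_simps)
    also have "\<dots> \<le> x ^ d * (x - 1) * (R) * x ^ r"
    proof -
      have "(x - 1) * 1 \<le> R" unfolding R_def using pm1_ge1[of x "Suc r"] x3 by simp
      then show ?thesis using x3 by (intro mult_right_mono mult_left_mono) auto
    qed
    also have "\<dots> \<le> x ^ e * (x - 1) * R * x ^ r"
      using x3 pw_gt1[OF q2, of "Suc r"] power_increasing[OF de, of x] unfolding R_def x_def
      by (intro mult_right_mono) auto
    finally have "Dg * Xn * (x ^ j - 1) < x ^ e * (x - 1) * R * x ^ r * (x ^ j - 1)"
      using xj by simp
    also have "\<dots> = x ^ e * (x - 1) * R * (Xn - (x ^ r - 1))" unfolding e1 by (simp add: algebra_simps)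
    finally show ?thesis by (simp add: algebra_simps)
  qed
  define P where "P = (x - 1) * R * Xn"
  have P: "P > 0" unfolding P_def R_def Xn_def using x3 pw_gt1[OF q2, of "Suc r"] pw_gt1[OF q2, of n] jn
    unfolding x_def by simp
  have "(T q d e j n (j - 1) + T q d e j (n - 1) j) * P
      = W * (Ng * R) * (Gg * (x - 1)) * Xn + W * x ^ e * Gj * (x - 1) * R * (M * Xn)"
    unfolding Tng Tmj P_def by (simp add: algebra_simps)
  also have "\<dots> = W * (Nj * (x ^ j - 1)) * (Gj * Dg) * Xn + W * x ^ e * Gj * (x - 1) * R * (Nj * (x ^ r - 1))"
    by (simp only: rNM rNN rG)
  also have "\<dots> = (W * Gj * Nj) * (Dg * (x ^ j - 1) * Xn + x ^ e * (x - 1) * R * (x ^ r - 1))"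
    by (simp add: algebra_simps)
  also have "\<dots> < (W * Gj * Nj) * (x ^ e * (x - 1) * R * Xn)" using poly pos by simp
  also have "\<dots> = T q d e j n j * P" unfolding Tnj P_def by (simp add: algebra_simps)
  finally have "T q d e j n (j - 1) + T q d e j (n - 1) j < T q d e j n j"
    using P by (simp add: mult_less_cancel_right_pos)
  then show ?thesis by simp
qed

theorem theorem4p3:
  fixes q d e i j :: nat
  assumes "prime_power q" and "q \<ge> 3"
    and "1 \<le> d" and "d \<le> e"
    and "i \<le> d - 1" and "1 \<le> j" and "j \<le> d"
  shows "\<bar>bil_eig q d e j i\<bar> > \<bar>bil_eig q d e j (i + 1)\<bar>"
proof -
  have q2: "q \<ge> 2" using assms by simp
  define n where "n = d - i"
  have n1: "n \<ge> 1" and nd: "n \<le> d" and n': "d - (i + 1) = n - 1" using assms unfolding n_def by auto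
  note A = abs_bil[OF q2 assms(7) assms(4) assms(2), of i, folded n_def]
  note B = abs_bil[OF q2 assms(7) assms(4) assms(2), of "i + 1", unfolded n']
  show ?thesis
  proof (cases "n \<le> j")
    case True
    have m: "min j n = n" "min j (n - 1) = n - 1" using True by auto
    have "\<bar>bil_eig q d e j (i + 1)\<bar> \<le> T q d e j (n - 1) (n - 1)" using B unfolding m by simp
    also have "\<dots> < T q d e j n n - T q d e j n (n - 1)"
      using caseA[OF assms(2) n1 True assms(7) assms(4)] .
    also have "\<dots> \<le> \<bar>bil_eig q d e j i\<bar>" using A n1 unfolding m by simp
    finally show ?thesis .
  next
    case False
    have m: "min j n = j" "min j (n - 1) = j" using False by auto
    have "\<bar>bil_eig q d e j (i + 1)\<bar> \<le> T q d e j (n - 1) j" using B unfolding m by simp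
    also have "\<dots> < T q d e j n j - T q d e j n (j - 1)"
      using caseB[OF assms(2) assms(6) _ nd assms(4)] False by simp
    also have "\<dots> \<le> \<bar>bil_eig q d e j i\<bar>" using A assms(6) unfolding m by simp
    finally show ?thesis .
  qed
qed

end
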